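(* Let $n\geq 0$ and $r\geq 0$ be integers and let $k\in\mathbf{Z}$. Then, as polynomials in $x$, \begin{align*} \tilde{A}_{n}^{(r,k)}(x)=\sum_{j=0}^{n}\Bigg\{\sum_{m=j}^{n}\sum_{l=0}^{m-j}(-1)^{m}\frac{\binom{m}{l}\binom{m-l}{j}}{\binom{m-l-j+r}{r}(l+1)^{k}}\, S_{1}(n,m)\,S_{2}(m-l-j+r,r)\Bigg\}(-x)^{j}. \end{align*}
   Context: For $k\in\mathbf{Z}$, the poly-logarithm factorial function is the formal power series $Lif_{k}(x)=\sum_{m=0}^{\infty}\frac{x^{m}}{m!(m+1)^{k}}$. For integers $r\geq 0$ and $k\in\mathbf{Z}$, the higher-order Cauchy of the second kind and poly-Cauchy of the second kind mixed type polynomials $\tilde{A}_{n}^{(r,k)}(x)$ are defined by the generating function \[\left(\frac{t}{(1+t)\log(1+t)}\right)^{r}Lif_{k}\left(-\log(1+t)\right)(1+t)^{x}=\sum_{n=0}^{\infty}\tilde{A}_{n}^{(r,k)}(x)\frac{t^{n}}{n!}.\] $S_{1}(n,m)$ denotes the (signed) Stirling numbers of the first kind, defined by $(x)_{n}=x(x-1)\cdots(x-n+1)=\sum_{m=0}^{n}S_{1}(n,m)x^{m}$, and $S_{2}(n,m)$ denotes the Stirling numbers of the second kind, defined by $\frac{(e^{x}-1)^{m}}{m!}=\sum_{l\geq m}S_{2}(l,m)\frac{x^{l}}{l!}$. *)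

theory Defs
  imports "HOL-Computational_Algebra.Formal_Power_Series" "HOL-Combinatorics.Stirling"
begin

definition Lif :: "int \<Rightarrow> real fps" where
  "Lif k = Abs_fps (\<lambda>m. 1 / (fact m * (of_nat (m + 1)) powi k))"

text \<open>Generating function of the mixed-type polynomials, with x a real parameter:
  (t/((1+t) log(1+t)))^r * Lif_k(-log(1+t)) * (1+t)^x.
  Here fps_ln 1 = log(1+t), fps_binomial x = (1+t)^x.\<close>
definition A_gen :: "nat \<Rightarrow> int \<Rightarrow> real \<Rightarrow> real fps" where
  "A_gen r k x = (fps_X / ((1 + fps_X) * fps_ln 1)) ^ r * (Lif k oo (- fps_ln 1)) * fps_binomial x"

definition A_tilde :: "nat \<Rightarrow> int \<Rightarrow> nat \<Rightarrow> real \<Rightarrow> real" where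
  "A_tilde r k n x = fact n * fps_nth (A_gen r k x) n"

text \<open>Signed Stirling numbers of the first kind: (x)_n = sum_m S1(n,m) x^m.\<close>
definition S1 :: "nat \<Rightarrow> nat \<Rightarrow> int" where
  "S1 n m = (-1) ^ (n - m) * int (stirling n m)"

definition S2 :: "nat \<Rightarrow> nat \<Rightarrow> nat" where
  "S2 n m = Stirling n m"

end

theory Submission
  imports Defs
begin

notation fps_nth (infixl "$" 75)


lemma Stirling_0_right: "Stirling p 0 = (if p = 0 then 1 else 0)"
  by (cases p) auto

lemma S2_fps: "((fps_exp (1::real) - 1) ^ r) $ p = fact r * real (Stirling p r) / fact p"
proof (induction r arbitrary: p)
  case 0
  then show ?case by (simp add: Stirling_0_right)
next
  case (Suc r)
  define E where "E = fps_exp (1::real) - 1"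
  define G where "G = E ^ Suc r"
  have E0: "E $ 0 = 0" by (simp add: E_def)
  have dG: "fps_deriv G = of_nat (Suc r) * (G + E ^ r)"
    unfolding G_def fps_deriv_power' by (simp add: E_def algebra_simps)
  have IH: "\<And>p. (E ^ r) $ p = fact r * real (Stirling p r) / fact p" using Suc unfolding E_def .
  have "G $ p = fact (Suc r) * real (Stirling p (Suc r)) / fact p" for p
  proof (induction p)
    case 0
    then show ?case by (simp add: G_def E0 fps_nth_power_0)
  next
    case (Suc p)
    have "of_nat (p+1) * G $ (p+1) = of_nat (Suc r) * (G $ p + (E^r) $ p)"
      using arg_cong[OF dG, of "\<lambda>f. f $ p"] by (simp add: fps_of_nat[symmetric] del: of_nat_Suc)
    also have "\<dots> = of_nat (Suc r) * (fact (Suc r) * real (Stirling p (Suc r)) / fact p + fact r * real (Stirling p r) / fact p)"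
      using Suc.IH IH by simp
    also have "\<dots> = of_nat (Suc p) * (fact (Suc r) * real (Stirling (Suc p) (Suc r)) / fact (Suc p))"
    proof -
      have f1: "fact (Suc r) = real (Suc r) * fact r" by simp
      have f2: "fact (Suc p) = real (Suc p) * fact p" by simp
      have st: "real (Stirling (Suc p) (Suc r)) = real (Suc r) * real (Stirling p (Suc r)) + real (Stirling p r)" by (simp add: algebra_simps)
      show ?thesis unfolding f2 st by (simp add: f1 field_simps del: of_nat_Suc fact_Suc)
    qed
    finally have h: "real (Suc p) * G $ Suc p = real (Suc p) * (fact (Suc r) * real (Stirling (Suc p) (Suc r)) / fact (Suc p))"
      by simp
    show ?case using mult_left_cancel[of "real (Suc p)", THEN iffD1, OF _ h] by simp
  qed
  then show ?case by (simp add: G_def E_def)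
qed

lemma S1_0: "S1 n 0 = (if n = 0 then 1 else 0)"
  by (cases n) (auto simp: S1_def)

lemma S1_rec: "S1 (Suc n) (Suc m) = S1 n m - int n * S1 n (Suc m)"
proof (cases "m < n")
  case True
  then have "Suc n - Suc m = Suc (n - Suc m)" "n - m = Suc (n - Suc m)" by auto
  then show ?thesis unfolding S1_def by (simp add: algebra_simps)
next
  case False
  then show ?thesis unfolding S1_def
    by (cases "m = n") (auto)
qed

lemma one_plus_X_inv: "(1 + fps_X :: real fps) * inverse (1 + fps_X) = 1"
  by (rule inverse_mult_eq_1') simp

lemma S1_fps: "(fps_ln (1::real) ^ m) $ n = fact m / fact n * of_int (S1 n m)"
proof (induction m arbitrary: n)
  case 0
  then show ?case by (simp add: S1_0)
next
  case (Suc m)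
  define L where "L = fps_ln (1::real)"
  define G where "G = L ^ Suc m"
  have L0: "L $ 0 = 0" by (simp add: L_def)
  have dG: "fps_deriv G = of_nat (Suc m) * inverse (1 + fps_X) * L ^ m"
    unfolding G_def fps_deriv_power' by (simp add: L_def fps_ln_deriv)
  have dG2: "fps_deriv G + fps_X * fps_deriv G = of_nat (Suc m) * L ^ m"
  proof -
    have "fps_deriv G + fps_X * fps_deriv G = (1 + fps_X) * fps_deriv G" by (simp add: algebra_simps)
    also have "\<dots> = of_nat (Suc m) * L ^ m * ((1 + fps_X) * inverse (1 + fps_X))"
      unfolding dG by (simp add: algebra_simps)
    finally show ?thesis by (simp add: one_plus_X_inv)
  qed
  have IH: "\<And>n. (L ^ m) $ n = fact m / fact n * of_int (S1 n m)" using Suc unfolding L_def .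
  have co: "of_nat (Suc n) * G $ Suc n + of_nat n * G $ n = of_nat (Suc m) * (L ^ m) $ n" for n
    using arg_cong[OF dG2, of "\<lambda>f. f $ n"]
    by (cases n) (simp_all add: fps_of_nat[symmetric] del: of_nat_Suc)
  have "G $ n = fact (Suc m) / fact n * of_int (S1 n (Suc m))" for n
  proof (induction n)
    case 0
    then show ?case by (simp add: G_def L0 fps_nth_power_0 S1_def)
  next
    case (Suc n)
    have "of_nat (Suc n) * G $ Suc n = of_nat (Suc m) * (L ^ m) $ n - of_nat n * G $ n"
      using co[of n] by simp
    also have "\<dots> = of_nat (Suc m) * (fact m / fact n * of_int (S1 n m)) - of_nat n * (fact (Suc m) / fact n * of_int (S1 n (Suc m)))"
      using IH Suc.IH by simp
    also have "\<dots> = of_nat (Suc n) * (fact (Suc m) / fact (Suc n) * of_int (S1 (Suc n) (Suc m)))"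
    proof -
      have f1: "fact (Suc m) = real (Suc m) * fact m" by simp
      have f2: "fact (Suc n) = real (Suc n) * fact n" by simp
      have st: "real_of_int (S1 (Suc n) (Suc m)) = of_int (S1 n m) - real n * of_int (S1 n (Suc m))"
        by (simp add: S1_rec)
      show ?thesis unfolding f2 st by (simp add: f1 field_simps del: of_nat_Suc fact_Suc)
    qed
    finally have h: "real (Suc n) * G $ Suc n = real (Suc n) * (fact (Suc m) / fact (Suc n) * of_int (S1 (Suc n) (Suc m)))"
      by simp
    show ?case using mult_left_cancel[of "real (Suc n)", THEN iffD1, OF _ h] by simp
  qed
  then show ?case by (simp add: G_def L_def)
qed



lemma exp_ln: "fps_exp c oo fps_ln (1::real) = fps_binomial c"
proof -
  let ?L = "fps_ln (1::real)"
  have L0: "?L $ 0 = 0" by simp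
  have "fps_deriv (fps_exp c oo ?L) = (fps_const c * fps_exp c oo ?L) * fps_deriv ?L"
    by (simp add: fps_compose_deriv[OF L0])
  also have "\<dots> = fps_const c * (fps_exp c oo ?L) / (1 + fps_X)"
    by (simp add: fps_compose_mult_distrib[OF L0] fps_ln_deriv fps_divide_unit)
  finally show ?thesis
    by (subst fps_binomial_ODE_unique'[symmetric]) simp
qed

lemma gen_compose:
  fixes r :: nat and k :: int and x :: real
  defines "L \<equiv> fps_ln (1::real)"
  defines "D \<equiv> 1 - fps_exp (-1::real)"
  defines "P \<equiv> Abs_fps (\<lambda>n. D $ Suc n)"
  shows "A_gen r k x = (fps_exp x * ((Lif k oo - fps_X) * P ^ r)) oo L"
proof -
  have L0: "L $ 0 = 0" by (simp add: L_def)
  have D0: "D $ 0 = 0" by (simp add: D_def)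
  have PX: "P * fps_X = D"
    by (rule fps_ext) (auto simp: P_def D0 mult.commute[of _ fps_X])
  have "(P oo L) * L = (P * fps_X) oo L"
    by (simp add: fps_compose_mult_distrib[OF L0] L0)
  also have "\<dots> = 1 - inverse (1 + fps_X)"
    by (simp add: PX D_def fps_compose_sub_distrib L_def exp_ln fps_binomial_minus_one)
  finally have h: "(P oo L) * L = 1 - inverse (1 + fps_X)" .
  have "(P oo L) * ((1 + fps_X) * L) = (1 + fps_X) * (1 - inverse (1 + fps_X))"
    by (metis h mult.assoc mult.commute)
  also have "\<dots> = fps_X"
    by (simp add: right_diff_distrib inverse_mult_eq_1')
  finally have h2: "(P oo L) * ((1 + fps_X) * L) = fps_X" .
  have Lnz: "L \<noteq> 0"
  proof
    assume "L = 0"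
    then have "L $ 1 = 0" by simp
    then show False by (simp add: L_def fps_ln_nth)
  qed
  have Xnz: "1 + fps_X \<noteq> (0::real fps)"
  proof
    assume "1 + fps_X = (0::real fps)"
    then have "(1 + fps_X :: real fps) $ 0 = 0" by simp
    then show False by simp
  qed
  have nz: "(1 + fps_X) * L \<noteq> 0" using Lnz Xnz by simp
  have q: "fps_X / ((1 + fps_X) * L) = P oo L"
    using h2 nz by (metis nonzero_mult_div_cancel_right)
  have m: "Lif k oo - L = (Lif k oo - fps_X) oo L"
  proof -
    have e: "- L = - fps_X oo L" by (simp add: fps_compose_uminus L0)
    show ?thesis unfolding e by (rule fps_compose_assoc[OF L0]) simp
  qed
  have B: "fps_binomial x = fps_exp x oo L" by (simp add: L_def exp_ln)
  show ?thesis
    unfolding A_gen_def L_def[symmetric] q m B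
    by (simp add: fps_compose_mult_distrib[OF L0] fps_compose_power[OF L0] algebra_simps)
qed



lemma swap_tri: "(\<Sum>m=0..(n::nat). \<Sum>j=0..m. f m j) = (\<Sum>j=0..n. \<Sum>m=j..n. (f m j :: real))"
proof (induction n)
  case 0 then show ?case by simp
next
  case (Suc n)
  have A: "(\<Sum>m=0..Suc n. \<Sum>j=0..m. f m j) = (\<Sum>m=0..n. \<Sum>j=0..m. f m j) + ((\<Sum>j=0..n. f (Suc n) j) + f (Suc n) (Suc n))"
    by (simp only: sum.atLeast0_atMost_Suc)
  have B: "(\<Sum>m=j..Suc n. f m j) = (\<Sum>m=j..n. f m j) + f (Suc n) j" if "j \<le> n" for j
    using that by (simp add: sum.atLeast_Suc_atMost_Suc_shift sum.cl_ivl_Suc)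
  have "(\<Sum>j=0..Suc n. \<Sum>m=j..Suc n. f m j) = (\<Sum>j=0..n. \<Sum>m=j..Suc n. f m j) + f (Suc n) (Suc n)"
    by (simp only: sum.atLeast0_atMost_Suc) simp
  also have "\<dots> = (\<Sum>j=0..n. (\<Sum>m=j..n. f m j) + f (Suc n) j) + f (Suc n) (Suc n)"
    by (rule arg_cong2[where f="(+)"], rule sum.cong) (simp_all add: B)
  also have "\<dots> = (\<Sum>m=0..Suc n. \<Sum>j=0..m. f m j)"
    unfolding A Suc.IH sum.distrib by (simp only: add.assoc)
  finally show ?case by simp
qed


lemma term_eq:
  fixes x :: real and k :: int and s :: int
  assumes "j \<le> m" "l \<le> m - j"
  shows "fact m * of_int s * (x ^ j / fact j) * ((-1) ^ l / (fact l * of_nat (l+1) powi k))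
     * ((-1) ^ (m - j - l) * fact r * real (Stirling (m - j - l + r) r) / fact (m - j - l + r))
   = (-1) ^ m * (of_nat (m choose l) * of_nat ((m - l) choose j))
          / (of_nat ((m - l - j + r) choose r) * (of_nat (l + 1)) powi k)
          * of_int s * of_nat (S2 (m - l - j + r) r) * (- x) ^ j"
proof -
  define q where "q = m - l - j"
  have m: "m = l + j + q" using assms unfolding q_def by linarith
  have e1: "m - j - l = q" "m - l - j = q" "m - l = j + q" by (auto simp: m)
  have b12: "real (m choose l) * real ((j + q) choose j) = fact m / (fact l * fact j * fact q)"
  proof -
    have "real (m choose l) = fact m / (fact l * fact (j + q))"
      using binomial_fact[of l m, where 'a=real] by (simp add: m)
    moreover have "real ((j + q) choose j) = fact (j + q) / (fact j * fact q)"
      using binomial_fact[of j "j+q", where 'a=real] by simp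
    ultimately show ?thesis by simp
  qed
  have b3: "real ((q + r) choose r) = fact (q + r) / (fact r * fact q)"
    using binomial_fact[of r "q+r", where 'a=real] by simp
  define w where "w = (of_nat (l+1) :: real) powi k"
  have pw: "w \<noteq> 0" by (simp add: w_def)
  have sg: "(-1::real) ^ m * (- x) ^ j = (-1) ^ l * (-1) ^ q * x ^ j"
  proof -
    have xm: "(- x) ^ j = (-1) ^ j * x ^ j" by (rule power_minus)
    have "(-1::real) ^ m = (-1) ^ l * (-1) ^ j * (-1) ^ q" unfolding m by (simp only: power_add)
    then have "(-1::real) ^ m * (- x) ^ j = (-1) ^ l * (-1) ^ q * ((-1) ^ j * (-1) ^ j) * x ^ j"
      unfolding xm by (simp only: ac_simps)
    also have "(-1::real) ^ j * (-1) ^ j = 1" by (simp flip: power_add)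
    finally show ?thesis by simp
  qed
  have "(-1) ^ m * (of_nat (m choose l) * of_nat ((m - l) choose j))
          / (of_nat ((m - l - j + r) choose r) * w)
          * of_int s * of_nat (S2 (m - l - j + r) r) * (- x) ^ j
      = ((-1) ^ m * (- x) ^ j) * (real (m choose l) * real ((j + q) choose j))
          / (real ((q + r) choose r) * w) * of_int s * real (Stirling (q + r) r)"
    unfolding e1 S2_def by simp
  also have "\<dots> = fact m * of_int s * (x ^ j / fact j) * ((-1) ^ l / (fact l * w))
     * ((-1) ^ q * fact r * real (Stirling (q + r) r) / fact (q + r))"
    unfolding sg b12 b3 using pw by (simp add: divide_simps)
  finally show ?thesis unfolding e1 w_def by simp
qed




lemma P_coeff:
  defines "D \<equiv> 1 - fps_exp (-1::real)"
  defines "P \<equiv> Abs_fps (\<lambda>n. D $ Suc n)"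
  shows "(P ^ r) $ q = (-1) ^ q * fact r * real (Stirling (q + r) r) / fact (q + r)"
proof -
  have D0: "D $ 0 = 0" by (simp add: D_def)
  have PX: "P * fps_X = D"
    by (rule fps_ext) (auto simp: P_def D0 mult.commute[of _ fps_X])
  have "(P ^ r) $ q = (P ^ r * fps_X ^ r) $ (q + r)"
    by (simp add: fps_X_power_mult_right_nth)
  also have "P ^ r * fps_X ^ r = D ^ r" by (simp add: PX flip: power_mult_distrib)
  finally have h1: "(P ^ r) $ q = (D ^ r) $ (q + r)" .
  have mX0: "(- fps_X :: real fps) $ 0 = 0" by simp
  have De: "D = - ((fps_exp 1 - 1) oo - fps_X)"
    by (simp add: D_def fps_compose_sub_distrib)
  have "D ^ r = (-1) ^ r * ((fps_exp 1 - 1) oo - fps_X) ^ r"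
    unfolding De by (rule power_minus)
  also have "\<dots> = fps_const ((-1) ^ r) * ((fps_exp 1 - 1) ^ r oo - fps_X)"
  proof -
    have c: "(-1::real fps) ^ r = fps_const ((-1) ^ r)"
      by (induction r) (simp_all add: fps_const_mult[symmetric] fps_const_neg)
    show ?thesis by (simp only: c fps_compose_power[OF mX0])
  qed
  finally have h2: "(D ^ r) $ p = (-1) ^ r * ((-1) ^ p * ((fps_exp 1 - 1) ^ r) $ p)" for p
    by (simp add: fps_compose_uminus')
  have "(-1::real) ^ r * (-1) ^ (q + r) = (-1) ^ q"
    by (simp add: power_add flip: mult.assoc power_mult_distrib)
  then show ?thesis unfolding h1 h2 S2_fps
    by (simp add: mult.assoc[symmetric])
qed


lemma M_coeff: "(Lif k oo - fps_X) $ l = (-1) ^ l / (fact l * of_nat (l+1) powi k)"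
  by (simp add: fps_compose_uminus' Lif_def)

theorem theorem1:
  fixes n r :: nat and k :: int and x :: real
  shows "A_tilde r k n x =
    (\<Sum>j = 0..n. (\<Sum>m = j..n. \<Sum>l = 0..m - j.
        (-1) ^ m * (of_nat (m choose l) * of_nat ((m - l) choose j))
          / (of_nat ((m - l - j + r) choose r) * (of_nat (l + 1)) powi k)
          * of_int (S1 n m) * of_nat (S2 (m - l - j + r) r)) * (- x) ^ j)"
proof -
  define L where "L = fps_ln (1::real)"
  define D where "D = 1 - fps_exp (-1::real)"
  define P where "P = Abs_fps (\<lambda>n. D $ Suc n)"
  define M where "M = Lif k oo - fps_X"
  define H where "H = fps_exp x * (M * P ^ r)"
  have gen: "A_gen r k x = H oo L"
    unfolding H_def M_def P_def D_def L_def by (rule gen_compose)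
  have Pc: "(P ^ r) $ q = (-1) ^ q * fact r * real (Stirling (q + r) r) / fact (q + r)" for q
    unfolding P_def D_def by (rule P_coeff)
  have Mc: "M $ l = (-1) ^ l / (fact l * of_nat (l+1) powi k)" for l
    unfolding M_def by (rule M_coeff)
  define T where "T = (\<lambda>m j l. fact m * of_int (S1 n m) * (x ^ j / fact j) * M $ l * (P ^ r) $ (m - j - l))"
  have Hc: "fact m * of_int (S1 n m) * H $ m = (\<Sum>j=0..m. \<Sum>l=0..m-j. T m j l)" for m
    unfolding H_def T_def fps_mult_nth
    by (simp add: sum_distrib_left diff_diff_add mult.assoc)
  have "A_tilde r k n x = fact n * (\<Sum>m=0..n. H $ m * (fact m / fact n * of_int (S1 n m)))"
    unfolding A_tilde_def gen fps_compose_nth L_def S1_fps ..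
  also have "\<dots> = (\<Sum>m=0..n. fact m * of_int (S1 n m) * H $ m)"
    by (simp add: sum_distrib_left mult_ac)
  also have "\<dots> = (\<Sum>m=0..n. \<Sum>j=0..m. \<Sum>l=0..m-j. T m j l)"
    using Hc by simp
  also have "\<dots> = (\<Sum>j=0..n. \<Sum>m=j..n. \<Sum>l=0..m-j. T m j l)"
    by (rule swap_tri)
  also have "\<dots> = (\<Sum>j = 0..n. \<Sum>m = j..n. \<Sum>l = 0..m - j.
        (-1) ^ m * (of_nat (m choose l) * of_nat ((m - l) choose j))
          / (of_nat ((m - l - j + r) choose r) * (of_nat (l + 1)) powi k)
          * of_int (S1 n m) * of_nat (S2 (m - l - j + r) r) * (- x) ^ j)"
  proof (intro sum.cong refl)
    fix j m l assume "m \<in> {j..n}" "l \<in> {0..m - j}"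
    then have "j \<le> m" "l \<le> m - j" by auto
    then show "T m j l = (-1) ^ m * (of_nat (m choose l) * of_nat ((m - l) choose j))
          / (of_nat ((m - l - j + r) choose r) * (of_nat (l + 1)) powi k)
          * of_int (S1 n m) * of_nat (S2 (m - l - j + r) r) * (- x) ^ j"
      unfolding T_def Mc Pc by (rule term_eq)
  qed
  finally show ?thesis by (simp only: sum_distrib_right)
qed

end
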